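(* Let $s>1$ be constant and $G\sim G_{n,p}$ with $p=\frac{\log n+\omega(n)}{n}$, $\omega(n)\to\infty$, $np=O(\log n)$. For the Death-Birth process on $G$ started from a single mutant, w.h.p. $N(X)\cap S_0$ does not increase during the first $\omega_0^{3/4}$ iterations.
   Context: Death-Birth process: $X\subseteq[n]$ is the mutant set (fitness $s$, others fitness 1); at each step a uniformly random vertex $v$ is chosen, then a neighbor $u$ of $v$ is chosen with probability proportional to its fitness, and $v$ takes the type of $u$. An iteration is a step in which $X$ changes. $N(X)=\{w\notin X:\exists v\in X, vw\in E(G)\}$. $\varepsilon=1/\log\log\log n$, $S_0=\{v:d(v)\le np/10\}$, $\omega_0=\frac{\varepsilon^2 np}{100\log(np)}$. *)

theory Defs
  imports "HOL-Probability.Probability" "HOL-Library.Landau_Symbols"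
begin

text \<open>Graphs on the vertex set [n] = {0..<n}; a graph is given by its set of edges,
each edge being a 2-element subset of {0..<n}.\<close>

definition vpairs :: "nat \<Rightarrow> nat set set" where
  "vpairs n = {e. \<exists>u v. u < n \<and> v < n \<and> u \<noteq> v \<and> e = {u, v}}"

definition gnp :: "nat \<Rightarrow> real \<Rightarrow> nat set set pmf" where
  "gnp n p = map_pmf (\<lambda>f. {e \<in> vpairs n. f e}) (Pi_pmf (vpairs n) False (\<lambda>_. bernoulli_pmf p))"

definition nbrs :: "nat set set \<Rightarrow> nat \<Rightarrow> nat set" where
  "nbrs E v = {u. {u, v} \<in> E \<and> u \<noteq> v}"

definition deg :: "nat set set \<Rightarrow> nat \<Rightarrow> nat" where
  "deg E v = card (nbrs E v)"

definition nbhd :: "nat set set \<Rightarrow> nat set \<Rightarrow> nat set" where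
  "nbhd E X = {w. w \<notin> X \<and> (\<exists>v\<in>X. {v, w} \<in> E \<and> v \<noteq> w)}"

definition S0 :: "nat set set \<Rightarrow> nat \<Rightarrow> real \<Rightarrow> nat set" where
  "S0 E n p = {v. v < n \<and> real (deg E v) \<le> real n * p / 10}"

definition eps :: "nat \<Rightarrow> real" where
  "eps n = 1 / ln (ln (ln (real n)))"

definition omega0 :: "nat \<Rightarrow> real \<Rightarrow> real" where
  "omega0 n p = (eps n)^2 * real n * p / (100 * ln (real n * p))"

text \<open>One step of the Death-Birth process with mutant fitness s on the graph E with
vertex set {0..<n}: a uniformly random vertex v dies; a neighbour u of v is chosen with
probability proportional to its fitness (s for mutants, 1 otherwise) and v takes the type of u.
Since the outcome only depends on whether u is a mutant, this is a Bernoulli choice with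
success probability s*m/(s*m+r), m resp. r = number of mutant resp. non-mutant neighbours.
(If v has no neighbours nothing happens.)\<close>
definition db_step :: "nat set set \<Rightarrow> nat \<Rightarrow> real \<Rightarrow> nat set \<Rightarrow> nat set pmf" where
  "db_step E n s X = do {
     v \<leftarrow> pmf_of_set {0..<n};
     (if nbrs E v = {} then return_pmf X else
       (let m = real (card (nbrs E v \<inter> X)); r = real (card (nbrs E v - X)) in
        map_pmf (\<lambda>b. if b then insert v X else X - {v})
                (bernoulli_pmf (s * m / (s * m + r)))))
   }"

text \<open>One iteration = one step in which X changes: the jump chain of the process
(the step conditioned on X changing; if X cannot change, it stays put).\<close>
definition db_iter :: "nat set set \<Rightarrow> nat \<Rightarrow> real \<Rightarrow> nat set \<Rightarrow> nat set pmf" where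
  "db_iter E n s X =
     (if measure_pmf.prob (db_step E n s X) {Y. Y \<noteq> X} = 0 then return_pmf X
      else cond_pmf (db_step E n s X) {Y. Y \<noteq> X})"

fun db_path :: "nat set set \<Rightarrow> nat \<Rightarrow> real \<Rightarrow> nat set \<Rightarrow> nat \<Rightarrow> nat set list pmf" where
  "db_path E n s X0 0 = return_pmf [X0]"
| "db_path E n s X0 (Suc m) =
     bind_pmf (db_path E n s X0 m) (\<lambda>xs. map_pmf (\<lambda>Y. xs @ [Y]) (db_iter E n s (last xs)))"

definition db_experiment :: "nat \<Rightarrow> real \<Rightarrow> real \<Rightarrow> nat \<Rightarrow> (nat set set \<times> nat set list) pmf" where
  "db_experiment n p s m = do {
     E \<leftarrow> gnp n p;
     v \<leftarrow> pmf_of_set {0..<n};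
     xs \<leftarrow> db_path E n s {v} m;
     return_pmf (E, xs)
   }"

definition no_increase :: "nat \<Rightarrow> real \<Rightarrow> nat \<Rightarrow> nat set set \<times> nat set list \<Rightarrow> bool" where
  "no_increase n p m = (\<lambda>(E, xs). \<forall>i < m.
      card (nbhd E (xs ! Suc i) \<inter> S0 E n p) \<le> card (nbhd E (xs ! i) \<inter> S0 E n p))"

end

theory Submission
  imports Defs "HOL-Real_Asymp.Real_Asymp"
begin


lemma nbrs_sym: "u \<in> nbrs E v \<longleftrightarrow> v \<in> nbrs E u"
  unfolding nbrs_def by (auto simp: insert_commute)

lemma step_support:
  assumes "Y \<in> set_pmf (db_step E n s X)"
  shows "Y \<subseteq> X \<union> \<Union>(nbrs E ` X)"
proof -
  from assms obtain v where v: "Y \<in> set_pmf (if nbrs E v = {} then return_pmf X else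
       (let m = real (card (nbrs E v \<inter> X)); r = real (card (nbrs E v - X)) in
        map_pmf (\<lambda>b. if b then insert v X else X - {v})
                (bernoulli_pmf (s * m / (s * m + r)))))"
    unfolding db_step_def by auto
  show ?thesis
  proof (cases "nbrs E v = {}")
    case True then show ?thesis using v by auto
  next
    case False
    then have "Y \<in> (\<lambda>b. if b then insert v X else X - {v}) ` set_pmf (bernoulli_pmf (s * real (card (nbrs E v \<inter> X)) /
        (s * real (card (nbrs E v \<inter> X)) + real (card (nbrs E v - X)))))"
      using v by (simp add: Let_def)
    then obtain b where b: "b \<in> set_pmf (bernoulli_pmf (s * real (card (nbrs E v \<inter> X)) /
        (s * real (card (nbrs E v \<inter> X)) + real (card (nbrs E v - X)))))"
      and Y: "Y = (if b then insert v X else X - {v})"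
      by (rule imageE)
    show ?thesis
    proof (cases b)
      case False then show ?thesis using Y by auto
    next
      case True
      have "card (nbrs E v \<inter> X) \<noteq> 0"
      proof
        assume "card (nbrs E v \<inter> X) = 0"
        then have "b \<in> set_pmf (bernoulli_pmf 0)" using b by simp
        then show False using True by (simp add: set_pmf_iff)
      qed
      then obtain u where "u \<in> nbrs E v" "u \<in> X" by (metis card.empty disjoint_iff)
      then have "v \<in> \<Union>(nbrs E ` X)" using nbrs_sym by blast
      then show ?thesis using Y True by auto
    qed
  qed
qed

lemma iter_support:
  assumes "Y \<in> set_pmf (db_iter E n s X)"
  shows "Y \<subseteq> X \<union> \<Union>(nbrs E ` X)"
proof (cases "measure_pmf.prob (db_step E n s X) {Y. Y \<noteq> X} = 0")
  case True then show ?thesis using assms unfolding db_iter_def by auto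
next
  case False
  then have ne: "set_pmf (db_step E n s X) \<inter> {Y. Y \<noteq> X} \<noteq> {}"
    by (simp add: measure_pmf_zero_iff)
  have "Y \<in> set_pmf (cond_pmf (db_step E n s X) {Y. Y \<noteq> X})"
    using assms False unfolding db_iter_def by simp
  then have "Y \<in> set_pmf (db_step E n s X)" using set_cond_pmf[OF ne] by blast
  then show ?thesis by (rule step_support)
qed

lemma path_support:
  "xs \<in> set_pmf (db_path E n s X0 m) \<Longrightarrow> length xs = Suc m \<and> xs ! 0 = X0 \<and>
     (\<forall>i<m. xs ! Suc i \<subseteq> xs ! i \<union> \<Union>(nbrs E ` (xs ! i)))"
proof (induction m arbitrary: xs)
  case 0 then show ?case by simp
next
  case (Suc m)
  from Suc.prems obtain ys Y where ys: "ys \<in> set_pmf (db_path E n s X0 m)"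
    and Y: "Y \<in> set_pmf (db_iter E n s (last ys))" and xs: "xs = ys @ [Y]" by auto
  from Suc.IH[OF ys] have IH: "length ys = Suc m" "ys ! 0 = X0"
    "\<forall>i<m. ys ! Suc i \<subseteq> ys ! i \<union> \<Union>(nbrs E ` (ys ! i))" by auto
  have last: "last ys = ys ! m" using IH by (cases ys rule: rev_cases) auto
  show ?case
  proof (intro conjI allI impI)
    show "length xs = Suc (Suc m)" using xs IH by simp
    show "xs ! 0 = X0" using xs IH by (simp add: nth_append)
    fix i assume i: "i < Suc m"
    show "xs ! Suc i \<subseteq> xs ! i \<union> \<Union>(nbrs E ` (xs ! i))"
    proof (cases "i < m")
      case True then show ?thesis using xs IH by (simp add: nth_append)
    next
      case False then have "i = m" using i by simp
      then show ?thesis using xs IH iter_support[OF Y] last by (simp add: nth_append)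
    qed
  qed
qed


fun reach :: "nat set set \<Rightarrow> nat \<Rightarrow> nat \<Rightarrow> nat set" where
  "reach E v 0 = {v}"
| "reach E v (Suc k) = reach E v k \<union> \<Union>(nbrs E ` reach E v k)"

lemma reach_mono: "k \<le> l \<Longrightarrow> reach E v k \<subseteq> reach E v l"
proof (induction l)
  case 0 then show ?case by simp
next
  case (Suc l)
  show ?case
  proof (cases "k = Suc l")
    case True then show ?thesis by simp
  next
    case False
    then have "reach E v k \<subseteq> reach E v l" using Suc by simp
    then show ?thesis by auto
  qed
qed

lemma path_in_reach:
  assumes "xs \<in> set_pmf (db_path E n s {v} m)"
  shows "i \<le> m \<Longrightarrow> xs ! i \<subseteq> reach E v i"
proof (induction i)
  case 0 then show ?case using path_support[OF assms] by simp
next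
  case (Suc i)
  then have "xs ! Suc i \<subseteq> xs ! i \<union> \<Union>(nbrs E ` (xs ! i))" using path_support[OF assms] by simp
  then show ?case using Suc by auto
qed

lemma bad_reach:
  assumes "xs \<in> set_pmf (db_path E n s {v} m)" "\<not> no_increase n p m (E, xs)"
  shows "S0 E n p \<inter> reach E v (Suc m) \<noteq> {}"
proof -
  from assms(2) obtain i where i: "i < m"
    and c: "card (nbhd E (xs ! Suc i) \<inter> S0 E n p) > card (nbhd E (xs ! i) \<inter> S0 E n p)"
    unfolding no_increase_def by auto
  then have "nbhd E (xs ! Suc i) \<inter> S0 E n p \<noteq> {}" by (metis card.empty not_less0)
  then obtain w where w: "w \<in> nbhd E (xs ! Suc i)" "w \<in> S0 E n p" by blast
  then obtain y where y: "y \<in> xs ! Suc i" "{y, w} \<in> E" "y \<noteq> w" unfolding nbhd_def by auto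
  then have wy: "w \<in> nbrs E y" unfolding nbrs_def by (auto simp: insert_commute)
  have "y \<in> reach E v (Suc i)" using path_in_reach[OF assms(1), of "Suc i"] i y by auto
  then have "w \<in> reach E v (Suc (Suc i))" using wy by auto
  moreover have "Suc (Suc i) \<le> Suc m" using i by simp
  ultimately have "w \<in> reach E v (Suc m)" using reach_mono[of "Suc (Suc i)" "Suc m" E v] by blast
  then show ?thesis using w by auto
qed

lemma reach_nbr: "u \<in> nbrs E x \<Longrightarrow> reach E u k \<subseteq> reach E x (Suc k)"
proof (induction k)
  case 0 then show ?case by auto
next
  case (Suc k)
  then show ?case by (auto simp del: reach.simps(2) simp: reach.simps(2)[of E u k] reach.simps(2)[of E x "Suc k"])
qed

lemma reach_sym: "x \<in> reach E v k \<Longrightarrow> v \<in> reach E x k"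
proof (induction k arbitrary: x)
  case 0 then show ?case by simp
next
  case (Suc k)
  show ?case
  proof (cases "x \<in> reach E v k")
    case True then show ?thesis using Suc.IH reach_mono[of k "Suc k" E x] by auto
  next
    case False
    then obtain u where u: "u \<in> reach E v k" "x \<in> nbrs E u" using Suc.prems by auto
    then have "v \<in> reach E u k" using Suc.IH by auto
    moreover have "u \<in> nbrs E x" using u nbrs_sym by auto
    ultimately show ?thesis using reach_nbr by blast
  qed
qed

lemma reach_card:
  assumes "\<And>x. finite (nbrs E x)" "\<And>x. card (nbrs E x) \<le> D"
  shows "finite (reach E v k) \<and> card (reach E v k) \<le> (D + 1) ^ k"
proof (induction k)
  case 0 then show ?case by simp
next
  case (Suc k)
  have f: "finite (reach E v (Suc k))" using Suc assms by auto
  have "card (\<Union>(nbrs E ` reach E v k)) \<le> (\<Sum>x\<in>reach E v k. card (nbrs E x))"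
    using Suc by (intro card_UN_le) auto
  also have "\<dots> \<le> (\<Sum>x\<in>reach E v k. D)" using assms by (intro sum_mono) auto
  also have "\<dots> = card (reach E v k) * D" by simp
  finally have u: "card (\<Union>(nbrs E ` reach E v k)) \<le> card (reach E v k) * D" .
  have "card (reach E v (Suc k)) \<le> card (reach E v k) + card (\<Union>(nbrs E ` reach E v k))"
    by (simp add: card_Un_le)
  also have "\<dots> \<le> card (reach E v k) * (D + 1)" using u by (simp add: algebra_simps)
  also have "\<dots> \<le> (D + 1) ^ k * (D + 1)" using Suc by (intro mult_right_mono) auto
  finally show ?case using f by (simp add: mult.commute del: reach.simps)
qed


lemma prob_bind_pmf:
  "measure_pmf.prob (bind_pmf M f) A = measure_pmf.expectation M (\<lambda>x. measure_pmf.prob (f x) A)"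
  using measurable_measure_pmf[of f]
  unfolding measure_pmf_bind
  by (subst measure_pmf.measure_bind[where N="count_space UNIV"]) auto

lemma path_hd: "map_pmf (\<lambda>xs. xs ! 0) (db_path E n s X0 m) = return_pmf X0"
proof -
  have "map_pmf (\<lambda>xs. xs ! 0) (db_path E n s X0 m) = map_pmf (\<lambda>_. X0) (db_path E n s X0 m)"
    using path_support by (intro map_pmf_cong) auto
  then show ?thesis by simp
qed

lemma exp_map:
  "map_pmf (\<lambda>(E, xs). (E, xs ! 0)) (db_experiment n p s m) =
   bind_pmf (gnp n p) (\<lambda>E. map_pmf (\<lambda>v. (E, {v})) (pmf_of_set {0..<n}))"
proof -
  have "map_pmf (\<lambda>(E, xs). (E, xs ! 0)) (db_path E n s {v} m \<bind> (\<lambda>xs. return_pmf (E, xs)))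
      = return_pmf (E, {v})" for E v
  proof -
    have "map_pmf (\<lambda>(E, xs). (E, xs ! 0)) (db_path E n s {v} m \<bind> (\<lambda>xs. return_pmf (E, xs)))
       = map_pmf (\<lambda>X. (E, X)) (map_pmf (\<lambda>xs. xs ! 0) (db_path E n s {v} m))"
      by (simp add: map_bind_pmf map_pmf_def bind_assoc_pmf bind_return_pmf)
    then show ?thesis by (simp add: path_hd)
  qed
  note inner = this
  show ?thesis
    unfolding db_experiment_def map_bind_pmf[of _ "gnp n p"] map_bind_pmf[of _ "pmf_of_set _"] inner
    by (simp add: map_pmf_def)
qed

lemma prob_reduce:
  assumes n: "n > 0"
  shows "measure_pmf.prob (db_experiment n p s m) {r. no_increase n p m r} \<ge>
    1 - measure_pmf.expectation (gnp n p)
      (\<lambda>E. real (card {v\<in>{0..<n}. S0 E n p \<inter> reach E v (Suc m) \<noteq> {}}) / real n)"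
proof -
  let ?M = "db_experiment n p s m"
  let ?g = "\<lambda>(E::nat set set, xs::nat set list). (E, xs ! 0)"
  define B' where "B' = {(E, X). \<exists>v. X = {v} \<and> S0 E n p \<inter> reach E v (Suc m) \<noteq> {}}"
  have sub: "measure_pmf.prob ?M {r. \<not> no_increase n p m r} \<le> measure_pmf.prob ?M (?g -` B')"
  proof (rule measure_pmf.finite_measure_mono_AE)
    show "AE x in measure_pmf ?M. x \<in> {r. \<not> no_increase n p m r} \<longrightarrow> x \<in> ?g -` B'"
    proof (rule AE_pmfI)
      fix r assume r: "r \<in> set_pmf ?M"
      obtain E xs where rr: "r = (E, xs)" by (cases r)
      from r obtain v where xs: "xs \<in> set_pmf (db_path E n s {v} m)"
        unfolding db_experiment_def rr by auto
      show "r \<in> {r. \<not> no_increase n p m r} \<longrightarrow> r \<in> ?g -` B'"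
        using bad_reach[OF xs] path_support[OF xs] unfolding rr B'_def by auto
    qed
  qed auto
  have "measure_pmf.prob ?M (?g -` B') = measure_pmf.prob (map_pmf ?g ?M) B'"
    by simp
  also have "\<dots> = measure_pmf.expectation (gnp n p)
      (\<lambda>E. real (card {v\<in>{0..<n}. S0 E n p \<inter> reach E v (Suc m) \<noteq> {}}) / real n)"
    unfolding exp_map prob_bind_pmf
  proof (intro Bochner_Integration.integral_cong refl)
    fix E
    have "measure_pmf.prob (map_pmf (\<lambda>v. (E, {v})) (pmf_of_set {0..<n})) B'
        = measure_pmf.prob (pmf_of_set {0..<n}) {v. S0 E n p \<inter> reach E v (Suc m) \<noteq> {}}"
      by (simp add: B'_def vimage_def)
    also have "\<dots> = real (card {v\<in>{0..<n}. S0 E n p \<inter> reach E v (Suc m) \<noteq> {}}) / real n"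
      using n by (subst measure_pmf_of_set) (auto simp: Int_def)
    finally show "measure_pmf.prob (map_pmf (\<lambda>v. (E, {v})) (pmf_of_set {0..<n})) B' = \<dots>" .
  qed
  finally have "measure_pmf.prob ?M {r. \<not> no_increase n p m r} \<le> measure_pmf.expectation (gnp n p)
      (\<lambda>E. real (card {v\<in>{0..<n}. S0 E n p \<inter> reach E v (Suc m) \<noteq> {}}) / real n)"
    using sub by linarith
  moreover have "measure_pmf.prob ?M {r. no_increase n p m r} = 1 - measure_pmf.prob ?M {r. \<not> no_increase n p m r}"
    using measure_pmf.prob_compl[of "{r. no_increase n p m r}" ?M]
    by (simp add: Compl_eq Diff_eq)
  ultimately show ?thesis by linarith
qed



lemma vpairs_sub: "vpairs n \<subseteq> Pow {0..<n}"
  unfolding vpairs_def by auto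

lemma finite_vpairs: "finite (vpairs n)"
  using vpairs_sub finite_subset by (metis finite_Pow_iff finite_atLeastLessThan)

lemma pair_in_vpairs: "{u, v} \<in> vpairs n \<longleftrightarrow> u < n \<and> v < n \<and> u \<noteq> v"
  unfolding vpairs_def by (auto simp: doubleton_eq_iff)

lemma gnp_support: "E \<in> set_pmf (gnp n p) \<Longrightarrow> E \<subseteq> vpairs n"
  unfolding gnp_def by auto

lemma finite_gnp_support: "finite (set_pmf (gnp n p))"
proof -
  have "set_pmf (gnp n p) \<subseteq> Pow (vpairs n)" using gnp_support by auto
  then show ?thesis using finite_vpairs by (meson finite_Pow_iff finite_subset)
qed

lemma nbrs_sub: "E \<subseteq> vpairs n \<Longrightarrow> nbrs E x \<subseteq> {0..<n}"
  unfolding nbrs_def using pair_in_vpairs by auto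

lemma deg_gnp:
  assumes v: "v < n" and p: "p \<in> {0..1}"
  shows "map_pmf (\<lambda>E. deg E v) (gnp n p) = binomial_pmf (n - 1) p"
proof -
  define A where "A = (\<lambda>u. {u, v}) ` ({0..<n} - {v})"
  have inj: "inj_on (\<lambda>u. {u, v}) ({0..<n} - {v})"
    by (auto simp: inj_on_def doubleton_eq_iff)
  have A_sub: "A \<subseteq> vpairs n" unfolding A_def using v pair_in_vpairs by auto
  have cardA: "card A = n - 1" unfolding A_def using inj v by (simp add: card_image)
  have finA: "finite A" unfolding A_def by simp
  have degf: "deg {e \<in> vpairs n. f e} v = card {e \<in> A. f e}" for f
  proof -
    have "nbrs {e \<in> vpairs n. f e} v = {u \<in> {0..<n} - {v}. f {u, v}}"
      unfolding nbrs_def using v pair_in_vpairs by auto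
    moreover have "card {u \<in> {0..<n} - {v}. f {u, v}} = card ((\<lambda>u. {u, v}) ` {u \<in> {0..<n} - {v}. f {u, v}})"
      using inj by (intro card_image[symmetric]) (auto simp: inj_on_def doubleton_eq_iff)
    moreover have "(\<lambda>u. {u, v}) ` {u \<in> {0..<n} - {v}. f {u, v}} = {e \<in> A. f e}"
      unfolding A_def by auto
    ultimately show ?thesis unfolding deg_def by simp
  qed
  have "map_pmf (\<lambda>E. deg E v) (gnp n p) =
      map_pmf (\<lambda>f. card {e \<in> A. f e}) (Pi_pmf (vpairs n) False (\<lambda>_. bernoulli_pmf p))"
    unfolding gnp_def map_pmf_comp by (simp add: degf)
  also have "\<dots> = map_pmf (\<lambda>f. card {e \<in> A. f e})
      (map_pmf (\<lambda>f x. if x \<in> A then f x else False) (Pi_pmf (vpairs n) False (\<lambda>_. bernoulli_pmf p)))"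
  proof -
    have e: "(\<lambda>f. card {e \<in> A. (if e \<in> A then f e else False)}) = (\<lambda>f. card {e \<in> A. f e})"
    proof
      fix f :: "nat set \<Rightarrow> bool"
      show "card {e \<in> A. (if e \<in> A then f e else False)} = card {e \<in> A. f e}"
        by (rule arg_cong[where f=card]) auto
    qed
    show ?thesis unfolding map_pmf_comp e ..
  qed
  also have "\<dots> = map_pmf (\<lambda>f. card {e \<in> A. f e}) (Pi_pmf A False (\<lambda>_. bernoulli_pmf p))"
    by (subst Pi_pmf_subset[OF finite_vpairs A_sub]) (rule refl)
  also have "\<dots> = binomial_pmf (n - 1) p"
    using binomial_pmf_altdef'[OF finA cardA p] by simp
  finally show ?thesis .
qed



lemma binom_markov:
  assumes q: "q \<in> {0..1}" and g: "\<And>k. k \<in> A \<Longrightarrow> 1 \<le> g k" "\<And>k. 0 \<le> g k"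
  shows "measure_pmf.prob (binomial_pmf N q) A \<le> (\<Sum>k\<le>N. pmf (binomial_pmf N q) k * g k)"
proof -
  have sub: "set_pmf (binomial_pmf N q) \<subseteq> {..N}"
    using q by (auto simp: set_pmf_binomial_eq)
  have "measure_pmf.prob (binomial_pmf N q) A = measure_pmf.prob (binomial_pmf N q) (A \<inter> {..N})"
    using sub by (intro measure_eq_AE AE_pmfI) auto
  also have "\<dots> = (\<Sum>k\<in>A \<inter> {..N}. pmf (binomial_pmf N q) k)"
    by (rule measure_measure_pmf_finite) simp
  also have "\<dots> \<le> (\<Sum>k\<in>A \<inter> {..N}. pmf (binomial_pmf N q) k * g k)"
    using g by (intro sum_mono) (simp add: mult_le_cancel_left1 pmf_nonneg)
  also have "\<dots> \<le> (\<Sum>k\<le>N. pmf (binomial_pmf N q) k * g k)"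
    using g by (intro sum_mono2) auto
  finally show ?thesis .
qed

lemma binom_mgf:
  assumes q: "q \<in> {0..1}" and z: "z \<ge> 0"
  shows "(\<Sum>k\<le>N. pmf (binomial_pmf N q) k * z ^ k) \<le> exp (N * q * (z - 1))"
proof -
  have "(\<Sum>k\<le>N. pmf (binomial_pmf N q) k * z ^ k) = (\<Sum>k\<le>N. of_nat (N choose k) * (q * z) ^ k * (1 - q) ^ (N - k))"
    using q by (intro sum.cong refl) (simp add: power_mult_distrib)
  also have "\<dots> = (q * z + (1 - q)) ^ N" by (rule binomial_ring[symmetric])
  also have "\<dots> \<le> exp (q * (z - 1)) ^ N"
  proof (rule power_mono)
    show "q * z + (1 - q) \<le> exp (q * (z - 1))"
      using exp_ge_add_one_self[of "q * (z - 1)"] by (simp add: algebra_simps)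
    show "0 \<le> q * z + (1 - q)" using q z by simp
  qed
  also have "\<dots> = exp (N * q * (z - 1))" by (simp add: exp_of_nat_mult[symmetric] mult.assoc)
  finally show ?thesis .
qed

lemma binom_lower:
  assumes q: "q \<in> {0..1}"
  shows "measure_pmf.prob (binomial_pmf N q) {k. real k \<le> a} \<le> exp (a - N * q * (1 - exp (-1)))"
proof -
  have "measure_pmf.prob (binomial_pmf N q) {k. real k \<le> a} \<le>
      (\<Sum>k\<le>N. pmf (binomial_pmf N q) k * (exp a * exp (-1) ^ k))"
  proof (rule binom_markov[OF q])
    fix k assume "k \<in> {k. real k \<le> a}"
    then have "exp a * exp (-1) ^ k = exp (a - k)"
      by (simp add: exp_of_nat_mult[symmetric] exp_diff exp_minus field_simps)
    then show "1 \<le> exp a * exp (-1) ^ k" using \<open>k \<in> _\<close> by simp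
  qed simp
  also have "\<dots> = exp a * (\<Sum>k\<le>N. pmf (binomial_pmf N q) k * exp (-1) ^ k)"
    by (simp add: sum_distrib_left algebra_simps)
  also have "\<dots> \<le> exp a * exp (N * q * (exp (-1) - 1))"
    using binom_mgf[OF q, of "exp (-1)" N] by (intro mult_left_mono) auto
  also have "\<dots> = exp (a - N * q * (1 - exp (-1)))" by (simp add: exp_add[symmetric] algebra_simps)
  finally show ?thesis .
qed

lemma binom_upper:
  assumes q: "q \<in> {0..1}"
  shows "measure_pmf.prob (binomial_pmf N q) {k. real k > D} \<le> exp (N * q * (exp 1 - 1) - D)"
proof -
  have "measure_pmf.prob (binomial_pmf N q) {k. real k > D} \<le>
      (\<Sum>k\<le>N. pmf (binomial_pmf N q) k * (exp (-D) * exp 1 ^ k))"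
  proof (rule binom_markov[OF q])
    fix k assume "k \<in> {k. real k > D}"
    then have "exp (-D) * exp 1 ^ k = exp (k - D)"
      by (simp add: exp_of_nat_mult[symmetric] exp_diff exp_minus field_simps)
    then show "1 \<le> exp (-D) * exp 1 ^ k" using \<open>k \<in> _\<close> by simp
  qed simp
  also have "\<dots> = exp (-D) * (\<Sum>k\<le>N. pmf (binomial_pmf N q) k * exp 1 ^ k)"
    by (simp add: sum_distrib_left algebra_simps)
  also have "\<dots> \<le> exp (-D) * exp (N * q * (exp 1 - 1))"
    using binom_mgf[OF q, of "exp 1" N] by (intro mult_left_mono) auto
  also have "\<dots> = exp (N * q * (exp 1 - 1) - D)" by (simp add: exp_add[symmetric] algebra_simps)
  finally show ?thesis .
qed



lemma count_bound:
  assumes E: "E \<subseteq> vpairs n" and n: "n > 0"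
  shows "real (card {v\<in>{0..<n}. S0 E n p \<inter> reach E v K \<noteq> {}}) / real n \<le>
    indicator {E. \<exists>x<n. deg E x > D} E + real (card (S0 E n p)) * real (D + 1) ^ K / real n"
proof (cases "\<exists>x<n. deg E x > D")
  case True
  have "card {v\<in>{0..<n}. S0 E n p \<inter> reach E v K \<noteq> {}} \<le> card {0..<n}"
    by (intro card_mono) auto
  then have "real (card {v\<in>{0..<n}. S0 E n p \<inter> reach E v K \<noteq> {}}) / real n \<le> 1"
    using n by simp
  moreover have "0 \<le> real (card (S0 E n p)) * real (D + 1) ^ K / real n" by simp
  moreover have "indicator {E. \<exists>x<n. deg E x > D} E = (1::real)" using True by (simp add: indicator_def)
  ultimately show ?thesis by linarith
next
  case False
  have nb: "nbrs E x \<subseteq> {0..<n}" for x using nbrs_sub[OF E] .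
  have fin: "finite (nbrs E x)" for x using nb finite_subset by blast
  have dg: "card (nbrs E x) \<le> D" for x
  proof (cases "x < n")
    case True then show ?thesis using False unfolding deg_def by auto
  next
    case False
    then have "nbrs E x = {}" using E pair_in_vpairs unfolding nbrs_def by auto
    then show ?thesis by simp
  qed
  have finS: "finite (S0 E n p)" unfolding S0_def by simp
  have "{v\<in>{0..<n}. S0 E n p \<inter> reach E v K \<noteq> {}} \<subseteq> (\<Union>w\<in>S0 E n p. reach E w K)"
    using reach_sym by blast
  then have "card {v\<in>{0..<n}. S0 E n p \<inter> reach E v K \<noteq> {}} \<le> card (\<Union>w\<in>S0 E n p. reach E w K)"
    using reach_card[OF fin dg] finS by (intro card_mono) auto
  also have "\<dots> \<le> (\<Sum>w\<in>S0 E n p. card (reach E w K))"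
    using finS by (rule card_UN_le)
  also have "\<dots> \<le> (\<Sum>w\<in>S0 E n p. (D + 1) ^ K)"
    using reach_card[OF fin dg] by (intro sum_mono) auto
  also have "\<dots> = card (S0 E n p) * (D + 1) ^ K" by simp
  finally have "real (card {v\<in>{0..<n}. S0 E n p \<inter> reach E v K \<noteq> {}}) \<le> real (card (S0 E n p)) * real (D + 1) ^ K"
    by (metis of_nat_le_iff of_nat_mult of_nat_power)
  then have "real (card {v\<in>{0..<n}. S0 E n p \<inter> reach E v K \<noteq> {}}) / real n \<le> real (card (S0 E n p)) * real (D + 1) ^ K / real n"
    using n by (simp add: divide_right_mono)
  moreover have "indicator {E. \<exists>x<n. deg E x > D} E = (0::real)" using False by (simp add: indicator_def)
  ultimately show ?thesis by linarith
qed

lemma exp_bound: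
  assumes n: "n > 0" and p: "p \<in> {0..1}"
  shows "measure_pmf.expectation (gnp n p)
      (\<lambda>E. real (card {v\<in>{0..<n}. S0 E n p \<inter> reach E v K \<noteq> {}}) / real n) \<le>
    real n * measure_pmf.prob (binomial_pmf (n - 1) p) {k. real k > real D} +
    real (D + 1) ^ K * measure_pmf.prob (binomial_pmf (n - 1) p) {k. real k \<le> real n * p / 10}"
proof -
  let ?G = "gnp n p"
  have int: "integrable (measure_pmf ?G) f" for f :: "nat set set \<Rightarrow> real"
    by (rule integrable_measure_pmf_finite[OF finite_gnp_support])
  let ?c = "real (D + 1) ^ K / real n"
  have "measure_pmf.expectation ?G
      (\<lambda>E. real (card {v\<in>{0..<n}. S0 E n p \<inter> reach E v K \<noteq> {}}) / real n) \<le>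
    measure_pmf.expectation ?G (\<lambda>E. indicator {E. \<exists>x<n. deg E x > D} E + ?c * real (card (S0 E n p)))"
    using count_bound[OF _ n, of _ p K D] gnp_support
    by (intro integral_mono_AE int AE_pmfI) (auto simp: algebra_simps)
  also have "\<dots> = measure_pmf.prob ?G {E. \<exists>x<n. deg E x > D} + ?c * measure_pmf.expectation ?G (\<lambda>E. real (card (S0 E n p)))"
    by (subst Bochner_Integration.integral_add) (auto simp: int)
  also have "measure_pmf.prob ?G {E. \<exists>x<n. deg E x > D} \<le> real n * measure_pmf.prob (binomial_pmf (n - 1) p) {k. real k > real D}"
  proof -
    have "{E. \<exists>x<n. deg E x > D} = (\<Union>x\<in>{0..<n}. {E. deg E x > D})" by auto
    then have "measure_pmf.prob ?G {E. \<exists>x<n. deg E x > D} \<le> (\<Sum>x\<in>{0..<n}. measure_pmf.prob ?G {E. deg E x > D})"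
      using measure_pmf.finite_measure_subadditive_finite[of "{0..<n}" "\<lambda>x. {E. deg E x > D}" ?G] by simp
    also have "\<dots> = (\<Sum>x\<in>{0..<n}. measure_pmf.prob (binomial_pmf (n - 1) p) {k. real k > real D})"
    proof (intro sum.cong refl)
      fix x assume "x \<in> {0..<n}"
      then have "measure_pmf.prob (map_pmf (\<lambda>E. deg E x) ?G) {k. real k > real D} = measure_pmf.prob (binomial_pmf (n - 1) p) {k. real k > real D}"
        using deg_gnp[OF _ p] by simp
      then show "measure_pmf.prob ?G {E. deg E x > D} = measure_pmf.prob (binomial_pmf (n - 1) p) {k. real k > real D}"
        by (simp add: vimage_def)
    qed
    finally show ?thesis by simp
  qed
  also have "measure_pmf.expectation ?G (\<lambda>E. real (card (S0 E n p))) = real n * measure_pmf.prob (binomial_pmf (n - 1) p) {k. real k \<le> real n * p / 10}"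
  proof -
    have cs: "real (card (S0 E n p)) = (\<Sum>v\<in>{0..<n}. indicator {E. real (deg E v) \<le> real n * p / 10} E)" for E
    proof -
      have "S0 E n p = {0..<n} \<inter> {v. real (deg E v) \<le> real n * p / 10}" unfolding S0_def by auto
      moreover have "real (card ({0..<n} \<inter> B)) = real (\<Sum>v\<in>{0..<n}. (indicator B v :: nat))" for B
        by (simp add: sum_indicator_eq_card)
      moreover have "real (\<Sum>v\<in>{0..<n}. (indicator B v :: nat)) = (\<Sum>v\<in>{0..<n}. (indicator B v :: real))" for B
        unfolding of_nat_sum by (intro sum.cong refl) (simp add: indicator_def)
      ultimately have "real (card (S0 E n p)) = (\<Sum>v\<in>{0..<n}. indicator {v. real (deg E v) \<le> real n * p / 10} v)"
        by metis
      then show ?thesis by (simp add: indicator_def)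
    qed
    have "measure_pmf.expectation ?G (\<lambda>E. real (card (S0 E n p))) =
        (\<Sum>v\<in>{0..<n}. measure_pmf.expectation ?G (indicator {E. real (deg E v) \<le> real n * p / 10}))"
      unfolding cs by (subst Bochner_Integration.integral_sum) (auto simp: int)
    also have "\<dots> = (\<Sum>v\<in>{0..<n}. measure_pmf.prob (binomial_pmf (n - 1) p) {k. real k \<le> real n * p / 10})"
    proof (intro sum.cong refl)
      fix v assume "v \<in> {0..<n}"
      then have "measure_pmf.prob (map_pmf (\<lambda>E. deg E v) ?G) {k. real k \<le> real n * p / 10} = measure_pmf.prob (binomial_pmf (n - 1) p) {k. real k \<le> real n * p / 10}"
        using deg_gnp[OF _ p] by simp
      then show "measure_pmf.expectation ?G (indicator {E. real (deg E v) \<le> real n * p / 10}) = measure_pmf.prob (binomial_pmf (n - 1) p) {k. real k \<le> real n * p / 10}"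
        by (simp add: vimage_def)
    qed
    finally show ?thesis by simp
  qed
  finally show ?thesis using n by (simp add: field_simps)
qed



definition gfun :: "real \<Rightarrow> real \<Rightarrow> real" where
  "gfun C x = ((C * x) powr (3/4) + 1) * ln ((2*C+4) * x) - 2/5 * x + 1/2"

lemma key_bound:
  fixes n :: nat and P C s :: real
  assumes L3: "ln (real n) \<ge> 3" and C: "C > 0" and lo: "real n * P \<ge> ln (real n)"
    and hi: "real n * P \<le> C * ln (real n)" and P1: "P \<le> 1" and lll: "ln (ln (ln (real n))) \<ge> 1"
  shows "measure_pmf.prob (db_experiment n P s (nat \<lfloor>(omega0 n P) powr (3/4)\<rfloor>))
            {r. no_increase n P (nat \<lfloor>(omega0 n P) powr (3/4)\<rfloor>) r}
         \<ge> 1 - (1 / real n + exp (gfun C (ln (real n))))"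
proof -
  define L where "L = ln (real n)"
  define m where "m = nat \<lfloor>(omega0 n P) powr (3/4)\<rfloor>"
  define K where "K = Suc m"
  define D where "D = nat \<lceil>2 * real n * P + 2 * L\<rceil>"
  have n0: "n > 0" using L3 by (cases n) auto
  have nr: "real n > 0" using n0 by simp
  have expL: "exp L = real n" unfolding L_def using nr by simp
  have L1: "L \<ge> 1" "L \<ge> 3" using L3 unfolding L_def by auto
  have nP3: "real n * P \<ge> 3" using lo L3 by linarith
  have P0: "P \<ge> 0"
  proof (rule ccontr)
    assume "\<not> P \<ge> 0"
    then have "real n * P < 0" using nr by (simp add: mult_pos_neg)
    then show False using nP3 by linarith
  qed
  have Pin: "P \<in> {0..1}" using P0 P1 by simp
  have e3: "exp (1::real) \<le> 3" by (rule exp_le)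
  have e2: "exp (1::real) \<ge> 2" using exp_ge_add_one_self[of 1] by simp
  have em1: "exp (-1::real) \<le> 1/2" using e2 by (simp add: exp_minus field_simps)
  have rn1: "real (n - 1) = real n - 1" using n0 by simp
  have red: "measure_pmf.prob (db_experiment n P s m) {r. no_increase n P m r} \<ge>
      1 - (real n * measure_pmf.prob (binomial_pmf (n - 1) P) {k. real k > real D} +
        real (D + 1) ^ K * measure_pmf.prob (binomial_pmf (n - 1) P) {k. real k \<le> real n * P / 10})"
    using prob_reduce[OF n0, where p=P and s=s and m=m] exp_bound[OF n0 Pin, where K=K and D=D] unfolding K_def by linarith
  have Dge: "real D \<ge> 2 * real n * P + 2 * L" unfolding D_def by (rule real_nat_ceiling_ge)
  have "real (n - 1) * P \<le> real n * P" using P0 rn1 by (simp add: mult_right_mono)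
  moreover have "real (n - 1) * P \<ge> 0" using P0 by simp
  ultimately have "real (n - 1) * P * (exp 1 - 1) \<le> real n * P * 2"
    using e3 e2 nP3 P0 by (intro mult_mono) auto
  then have up1: "real (n - 1) * P * (exp 1 - 1) - real D \<le> - 2 * L" using Dge by linarith
  have "measure_pmf.prob (binomial_pmf (n - 1) P) {k. real k > real D} \<le> exp (- 2 * L)"
    using binom_upper[OF Pin, of "n - 1" "real D"] up1 by (meson exp_le_cancel_iff order.trans)
  then have up: "real n * measure_pmf.prob (binomial_pmf (n - 1) P) {k. real k > real D} \<le> 1 / real n"
  proof -
    assume a: "measure_pmf.prob (binomial_pmf (n - 1) P) {k. real k > real D} \<le> exp (- 2 * L)"
    have "exp (2 * L) = exp L * exp L" by (simp only: mult_2 exp_add)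
    then have e2L: "exp (2 * L) = real n * real n" using expL by simp
    have "exp (- 2 * L) * exp (2 * L) = exp (- 2 * L + 2 * L)" by (simp only: exp_add)
    then have "exp (- 2 * L) * (real n * real n) = 1" using e2L by simp
    then have ee: "exp (- 2 * L) = 1 / (real n * real n)" using nr by (simp add: eq_divide_eq)
    have "real n * measure_pmf.prob (binomial_pmf (n - 1) P) {k. real k > real D} \<le> real n * (1 / (real n * real n))"
      using a ee nr by (intro mult_left_mono) auto
    also have "\<dots> = 1 / real n" using nr by simp
    finally show ?thesis .
  qed
  have "real (n - 1) * P * (1 - exp (-1)) \<ge> real (n - 1) * P * (1/2)"
    using em1 P0 n0 by (intro mult_left_mono) auto
  then have lo1: "real n * P / 10 - real (n - 1) * P * (1 - exp (-1)) \<le> - 2/5 * L + 1/2"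
    using rn1 P1 lo unfolding L_def by (simp add: algebra_simps)
  have low: "measure_pmf.prob (binomial_pmf (n - 1) P) {k. real k \<le> real n * P / 10} \<le> exp (- 2/5 * L + 1/2)"
    using binom_lower[OF Pin, of "n - 1" "real n * P / 10"] lo1 by (meson exp_le_cancel_iff order.trans)
  have eps_pos: "eps n > 0" and eps_le: "eps n \<le> 1"
    using lll unfolding eps_def by auto
  have eps2: "(eps n)^2 \<le> 1" using eps_pos eps_le by (simp add: power_le_one)
  have lnP: "ln (real n * P) \<ge> 1"
    using nP3 e3 by (subst ln_ge_iff) auto
  have om0: "omega0 n P \<ge> 0" unfolding omega0_def using lnP P0 by simp
  have "omega0 n P \<le> real n * P / 100"
  proof -
    have "omega0 n P = (eps n)^2 * (real n * P) / (100 * ln (real n * P))"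
      unfolding omega0_def by (simp add: mult.assoc)
    also have "\<dots> \<le> 1 * (real n * P) / (100 * 1)"
      using eps2 lnP nP3 by (intro frac_le mult_right_mono) auto
    finally show ?thesis by simp
  qed
  then have omC: "omega0 n P \<le> C * L" using hi nP3 unfolding L_def by linarith
  have "real m \<le> omega0 n P powr (3/4)" unfolding m_def by simp
  also have "\<dots> \<le> (C * L) powr (3/4)" using om0 omC by (intro powr_mono2) auto
  finally have Kle: "real K \<le> (C * L) powr (3/4) + 1" unfolding K_def by simp
  have "real D \<le> 2 * real n * P + 2 * L + 1"
  proof -
    have "2 * real n * P + 2 * L \<ge> 0" using nP3 L1 by simp
    then have "real D = real_of_int \<lceil>2 * real n * P + 2 * L\<rceil>" unfolding D_def by simp
    then show ?thesis by linarith
  qed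
  then have D1: "real (D + 1) \<le> (2 * C + 4) * L" using hi L1 unfolding L_def by (simp add: algebra_simps)
  have D1pos: "real (D + 1) \<ge> 1" by simp
  have lnD: "0 \<le> ln (real (D + 1))" "ln (real (D + 1)) \<le> ln ((2 * C + 4) * L)"
    using D1 D1pos by auto
  have "real (D + 1) ^ K = exp (real K * ln (real (D + 1)))"
  proof -
    have "exp (real K * ln (real (D + 1))) = exp (ln (real (D + 1))) ^ K" by (rule exp_of_nat_mult)
    also have "exp (ln (real (D + 1))) = real (D + 1)" using D1pos by (intro exp_ln) simp
    finally show ?thesis by simp
  qed
  also have "\<dots> \<le> exp (((C * L) powr (3/4) + 1) * ln ((2 * C + 4) * L))"
    using Kle lnD by (intro exp_mono mult_mono) auto
  finally have grow: "real (D + 1) ^ K \<le> exp (((C * L) powr (3/4) + 1) * ln ((2 * C + 4) * L))" .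
  have "real (D + 1) ^ K * measure_pmf.prob (binomial_pmf (n - 1) P) {k. real k \<le> real n * P / 10}
      \<le> exp (((C * L) powr (3/4) + 1) * ln ((2 * C + 4) * L)) * exp (- 2/5 * L + 1/2)"
    using grow low by (intro mult_mono) auto
  also have "\<dots> = exp (gfun C L)"
  proof -
    have "exp (((C * L) powr (3/4) + 1) * ln ((2 * C + 4) * L)) * exp (- 2/5 * L + 1/2)
       = exp (((C * L) powr (3/4) + 1) * ln ((2 * C + 4) * L) + (- 2/5 * L + 1/2))"
      by (simp only: exp_add)
    moreover have "((C * L) powr (3/4) + 1) * ln ((2 * C + 4) * L) + (- 2/5 * L + 1/2) = gfun C L"
      unfolding gfun_def by simp
    ultimately show ?thesis by simp
  qed
  finally have second: "real (D + 1) ^ K * measure_pmf.prob (binomial_pmf (n - 1) P) {k. real k \<le> real n * P / 10}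
      \<le> exp (gfun C L)" .
  show ?thesis using red up second unfolding m_def L_def by linarith
qed


theorem mainTheorem14:
  fixes s :: real and \<omega> :: "nat \<Rightarrow> real" and p :: "nat \<Rightarrow> real"
  assumes "s > 1"
    and "filterlim \<omega> at_top sequentially"
    and "\<And>n. p n = (ln (real n) + \<omega> n) / real n"
    and "(\<lambda>n. real n * p n) \<in> O(\<lambda>n. ln (real n))"
  shows "(\<lambda>n. measure_pmf.prob
            (db_experiment n (p n) s (nat \<lfloor>(omega0 n (p n)) powr (3/4)\<rfloor>))
            {r. no_increase n (p n) (nat \<lfloor>(omega0 n (p n)) powr (3/4)\<rfloor>) r})
         \<longlonglongrightarrow> 1"
proof -
  from assms(4) obtain C where C: "C > 0"
    and ev: "eventually (\<lambda>n. norm (real n * p n) \<le> C * norm (ln (real n))) at_top"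
    by (elim landau_o.bigE)
  have ev_om: "eventually (\<lambda>n. \<omega> n \<ge> 0) at_top"
    using assms(2) by (simp add: filterlim_at_top)
  have ev1: "eventually (\<lambda>n::nat. ln (real n) \<ge> 3) at_top" by real_asymp
  have ev2: "eventually (\<lambda>n::nat. ln (ln (ln (real n))) \<ge> 1) at_top" by real_asymp
  have ev3: "eventually (\<lambda>n::nat. C * ln (real n) \<le> real n) at_top" using C by real_asymp
  let ?Q = "\<lambda>n. measure_pmf.prob
            (db_experiment n (p n) s (nat \<lfloor>(omega0 n (p n)) powr (3/4)\<rfloor>))
            {r. no_increase n (p n) (nat \<lfloor>(omega0 n (p n)) powr (3/4)\<rfloor>) r}"
  have low: "eventually (\<lambda>n. 1 - (1 / real n + exp (gfun C (ln (real n)))) \<le> ?Q n) at_top"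
    using ev ev_om ev1 ev2 ev3
  proof eventually_elim
    case (elim n)
    have n0: "real n > 0" using elim(3) by (cases n) auto
    have np: "real n * p n = ln (real n) + \<omega> n" using n0 assms(3)[of n] by simp
    have lo: "real n * p n \<ge> ln (real n)" using np elim(2) by simp
    have hi: "real n * p n \<le> C * ln (real n)" using elim(1) elim(3) by simp
    have "p n = (real n * p n) / real n" using n0 by simp
    also have "\<dots> \<le> C * ln (real n) / real n" using hi n0 by (intro divide_right_mono) auto
    also have "\<dots> \<le> 1" using elim(5) n0 by simp
    finally have P1: "p n \<le> 1" .
    show ?case by (rule key_bound[OF elim(3) C lo hi P1 elim(4)])
  qed
  have up: "eventually (\<lambda>n. ?Q n \<le> 1) at_top" by simp
  have lim: "(\<lambda>n. 1 - (1 / real n + exp (gfun C (ln (real n))))) \<longlonglongrightarrow> 1"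
    unfolding gfun_def using C by real_asymp
  show ?thesis by (rule tendsto_sandwich[OF low up lim tendsto_const])
qed

end
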